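(* Let $\Gamma$ be a totally ordered additive abelian group and $E,F$ finite disjoint sets. A function $\mu\colon\binom{E}{\ast}\times\binom{F}{\ast}\to\overline{\Gamma}$ satisfies the valuated bimatroid axioms (1) and (2) below if and only if the function $\nu\colon\binom{E\sqcup F}{|E|}\to\overline{\Gamma}$, $\nu(S)=\mu(E- S,\,S\cap F)$, is a valuated matroid of rank $|E|$ on $E\sqcup F$ with $\nu(E)=0$. Axioms: (1) $\mu(\emptyset,\emptyset)=0$. (2) For all $(I,J),(I',J')\in\binom{E}{\ast}\times\binom{F}{\ast}$: (i) if $i'\in I'- I$, then either there is $i\in I- I'$ with $\mu(I,J)+\mu(I',J')\geq\mu(I-\{i\}\cup\{i'\},J)+\mu(I'-\{i'\}\cup\{i\},J')$, or there is $j'\in J'- J$ with $\mu(I,J)+\mu(I',J')\geq\mu(I\cup\{i'\},J\cup\{j'\})+\mu(I'-\{i'\},J'-\{j'\})$; (ii) if $j\in J- J'$, then either there is $i\in I- I'$ with $\mu(I,J)+\mu(I',J')\geq\mu(I-\{i\},J-\{j\})+\mu(I'\cup\{i\},J'\cup\{j\})$, or there is $j'\in J'- J$ with $\mu(I,J)+\mu(I',J')\geq\mu(I,J-\{j\}\cup\{j'\})+\mu(I',J'-\{j'\}\cup\{j\})$.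
   Context: $\overline{\Gamma}=\Gamma\sqcup\{\infty\}$ with $\infty$ larger than every element of $\Gamma$. $\binom{E}{\ast}\times\binom{F}{\ast}$ is the set of pairs $(I,J)$ with $I\subseteq E$, $J\subseteq F$, $|I|=|J|$; $\binom{X}{r}$ is the set of $r$-element subsets of $X$. A valuated matroid of rank $r$ on a finite set $X$ is a map $\nu\colon\binom{X}{r}\to\overline{\Gamma}$, not identically $\infty$, such that for all $S,T\in\binom{X}{r}$ and every $s\in S- T$ there is $t\in T- S$ with $\nu(S)+\nu(T)\geq\nu(S-\{s\}\cup\{t\})+\nu(T-\{t\}\cup\{s\})$. *)

theory Defs
  imports Main
begin

text \<open>The extended group \<open>\<Gamma> \<union> {\<infinity>}\<close> is modelled as \<open>'g option\<close>:
  \<open>Some g\<close> is \<open>g \<in> \<Gamma>\<close> and \<open>None\<close> is \<open>\<infinity>\<close>.\<close>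

definition ext_add :: "'g::linordered_ab_group_add option \<Rightarrow> 'g option \<Rightarrow> 'g option" where
  "ext_add a b = (case (a, b) of (Some x, Some y) \<Rightarrow> Some (x + y) | _ \<Rightarrow> None)"

definition ext_le :: "'g::linordered_ab_group_add option \<Rightarrow> 'g option \<Rightarrow> bool" where
  "ext_le a b = (case (a, b) of
       (_, None) \<Rightarrow> True
     | (None, Some _) \<Rightarrow> False
     | (Some x, Some y) \<Rightarrow> x \<le> y)"

text \<open>Valuated matroid of rank r on a finite set X; only the values on r-subsets of X matter.\<close>
definition valuated_matroid ::
  "'e set \<Rightarrow> nat \<Rightarrow> ('e set \<Rightarrow> 'g::linordered_ab_group_add option) \<Rightarrow> bool" where
  "valuated_matroid X r \<nu> \<longleftrightarrow>
     finite X \<and>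
     (\<exists>S. S \<subseteq> X \<and> card S = r \<and> \<nu> S \<noteq> None) \<and>
     (\<forall>S T. S \<subseteq> X \<and> card S = r \<and> T \<subseteq> X \<and> card T = r \<longrightarrow>
        (\<forall>s \<in> S - T. \<exists>t \<in> T - S.
           ext_le (ext_add (\<nu> (S - {s} \<union> {t})) (\<nu> (T - {t} \<union> {s}))) (ext_add (\<nu> S) (\<nu> T))))"

definition bimat_dom :: "'e set \<Rightarrow> 'e set \<Rightarrow> 'e set \<Rightarrow> 'e set \<Rightarrow> bool" where
  "bimat_dom E F I J \<longleftrightarrow> I \<subseteq> E \<and> J \<subseteq> F \<and> card I = card J"

definition valuated_bimatroid_axioms ::
  "'e set \<Rightarrow> 'e set \<Rightarrow> ('e set \<Rightarrow> 'e set \<Rightarrow> 'g::linordered_ab_group_add option) \<Rightarrow> bool" where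
  "valuated_bimatroid_axioms E F \<mu> \<longleftrightarrow>
     \<mu> {} {} = Some 0 \<and>
     (\<forall>I J I' J'. bimat_dom E F I J \<and> bimat_dom E F I' J' \<longrightarrow>
        (\<forall>i' \<in> I' - I.
           (\<exists>i \<in> I - I'. ext_le (ext_add (\<mu> (I - {i} \<union> {i'}) J) (\<mu> (I' - {i'} \<union> {i}) J'))
                                 (ext_add (\<mu> I J) (\<mu> I' J'))) \<or>
           (\<exists>j' \<in> J' - J. ext_le (ext_add (\<mu> (I \<union> {i'}) (J \<union> {j'})) (\<mu> (I' - {i'}) (J' - {j'})))
                                 (ext_add (\<mu> I J) (\<mu> I' J')))) \<and>
        (\<forall>j \<in> J - J'.
           (\<exists>i \<in> I - I'. ext_le (ext_add (\<mu> (I - {i}) (J - {j})) (\<mu> (I' \<union> {i}) (J' \<union> {j})))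
                                 (ext_add (\<mu> I J) (\<mu> I' J'))) \<or>
           (\<exists>j' \<in> J' - J. ext_le (ext_add (\<mu> I (J - {j} \<union> {j'})) (\<mu> I' (J' - {j'} \<union> {j})))
                                 (ext_add (\<mu> I J) (\<mu> I' J')))))"

end

theory Submission
  imports Defs
begin

lemma card_dom:
  assumes "finite E" "finite F" "E \<inter> F = {}" "S \<subseteq> E \<union> F" "card S = card E"
  shows "card (E - S) = card (S \<inter> F)"
proof -
  have fS: "finite S" using assms finite_subset by blast
  have "S = (S \<inter> E) \<union> (S \<inter> F)" using assms by blast
  hence "card S = card (S \<inter> E) + card (S \<inter> F)"
    using fS assms(3) by (metis card_Un_disjoint finite_Int inf_assoc inf_bot_right inf_commute inf_left_commute)
  moreover have "card E = card (E - S) + card (E \<inter> S)"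
    using assms(1) by (metis card_Diff_subset_Int card_mono Int_lower1 finite_Int le_add_diff_inverse2 card_Int_Diff add.commute)
  ultimately show ?thesis using assms(5) by (simp add: Int_commute)
qed

lemma card_S:
  assumes "finite E" "finite F" "E \<inter> F = {}" "I \<subseteq> E" "J \<subseteq> F" "card I = card J"
  shows "card ((E - I) \<union> J) = card E"
proof -
  have "card ((E - I) \<union> J) = card (E - I) + card J"
    using assms by (intro card_Un_disjoint) (auto intro: finite_subset)
  moreover have "card (E - I) = card E - card I" using assms by (meson card_Diff_subset finite_subset)
  moreover have "card I \<le> card E" using assms card_mono by metis
  ultimately show ?thesis using assms by simp
qed


lemma fwd:
  assumes fin: "finite E" "finite F" and disj: "E \<inter> F = {}"
    and ax: "valuated_bimatroid_axioms E F \<mu>"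
    and S: "S \<subseteq> E \<union> F" "card S = card E" and T: "T \<subseteq> E \<union> F" "card T = card E"
    and s: "s \<in> S - T"
  shows "\<exists>t\<in>T - S. ext_le (ext_add (\<mu> (E - (S - {s} \<union> {t})) ((S - {s} \<union> {t}) \<inter> F))
                                (\<mu> (E - (T - {t} \<union> {s})) ((T - {t} \<union> {s}) \<inter> F)))
                       (ext_add (\<mu> (E - S) (S \<inter> F)) (\<mu> (E - T) (T \<inter> F)))"
proof -
  have dS: "bimat_dom E F (E - S) (S \<inter> F)" unfolding bimat_dom_def
    using card_dom[OF fin disj S] by auto
  have dT: "bimat_dom E F (E - T) (T \<inter> F)" unfolding bimat_dom_def
    using card_dom[OF fin disj T] by auto
  from ax dS dT have A:
    "\<forall>i' \<in> (E - T) - (E - S).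
           (\<exists>i \<in> (E - S) - (E - T). ext_le (ext_add (\<mu> ((E - S) - {i} \<union> {i'}) (S \<inter> F)) (\<mu> ((E - T) - {i'} \<union> {i}) (T \<inter> F)))
                                 (ext_add (\<mu> (E - S) (S \<inter> F)) (\<mu> (E - T) (T \<inter> F)))) \<or>
           (\<exists>j' \<in> (T \<inter> F) - (S \<inter> F). ext_le (ext_add (\<mu> ((E - S) \<union> {i'}) ((S \<inter> F) \<union> {j'})) (\<mu> ((E - T) - {i'}) ((T \<inter> F) - {j'})))
                                 (ext_add (\<mu> (E - S) (S \<inter> F)) (\<mu> (E - T) (T \<inter> F))))"
   and B: "\<forall>j \<in> (S \<inter> F) - (T \<inter> F).
           (\<exists>i \<in> (E - S) - (E - T). ext_le (ext_add (\<mu> ((E - S) - {i}) ((S \<inter> F) - {j})) (\<mu> ((E - T) \<union> {i}) ((T \<inter> F) \<union> {j})))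
                                 (ext_add (\<mu> (E - S) (S \<inter> F)) (\<mu> (E - T) (T \<inter> F)))) \<or>
           (\<exists>j' \<in> (T \<inter> F) - (S \<inter> F). ext_le (ext_add (\<mu> (E - S) ((S \<inter> F) - {j} \<union> {j'})) (\<mu> (E - T) ((T \<inter> F) - {j'} \<union> {j})))
                                 (ext_add (\<mu> (E - S) (S \<inter> F)) (\<mu> (E - T) (T \<inter> F))))"
    unfolding valuated_bimatroid_axioms_def by blast+
  show ?thesis
  proof (cases "s \<in> E")
    case True
    hence "s \<in> (E - T) - (E - S)" using s by auto
    with A consider
      (a) i where "i \<in> (E - S) - (E - T)" "ext_le (ext_add (\<mu> ((E - S) - {i} \<union> {s}) (S \<inter> F)) (\<mu> ((E - T) - {s} \<union> {i}) (T \<inter> F)))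
                                 (ext_add (\<mu> (E - S) (S \<inter> F)) (\<mu> (E - T) (T \<inter> F)))"
    | (b) j' where "j' \<in> (T \<inter> F) - (S \<inter> F)" "ext_le (ext_add (\<mu> ((E - S) \<union> {s}) ((S \<inter> F) \<union> {j'})) (\<mu> ((E - T) - {s}) ((T \<inter> F) - {j'})))
                                 (ext_add (\<mu> (E - S) (S \<inter> F)) (\<mu> (E - T) (T \<inter> F)))"
      by blast
    then show ?thesis
    proof cases
      case a
      have e1: "E - (S - {s} \<union> {i}) = (E - S) - {i} \<union> {s}" "(S - {s} \<union> {i}) \<inter> F = S \<inter> F"
           "E - (T - {i} \<union> {s}) = (E - T) - {s} \<union> {i}" "(T - {i} \<union> {s}) \<inter> F = T \<inter> F"
        using a(1) True s disj by auto
      show ?thesis apply (rule bexI[of _ i]) using a e1 by auto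
    next
      case b
      have e1: "E - (S - {s} \<union> {j'}) = (E - S) \<union> {s}" "(S - {s} \<union> {j'}) \<inter> F = S \<inter> F \<union> {j'}"
           "E - (T - {j'} \<union> {s}) = (E - T) - {s}" "(T - {j'} \<union> {s}) \<inter> F = T \<inter> F - {j'}"
        using b(1) True s disj by auto
      show ?thesis apply (rule bexI[of _ j']) using b e1 by auto
    qed
  next
    case False
    hence sF: "s \<in> F" using s S by auto
    hence "s \<in> (S \<inter> F) - (T \<inter> F)" using s by auto
    with B consider
      (a) i where "i \<in> (E - S) - (E - T)" "ext_le (ext_add (\<mu> ((E - S) - {i}) ((S \<inter> F) - {s})) (\<mu> ((E - T) \<union> {i}) ((T \<inter> F) \<union> {s})))
                                 (ext_add (\<mu> (E - S) (S \<inter> F)) (\<mu> (E - T) (T \<inter> F)))"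
    | (b) j' where "j' \<in> (T \<inter> F) - (S \<inter> F)" "ext_le (ext_add (\<mu> (E - S) ((S \<inter> F) - {s} \<union> {j'})) (\<mu> (E - T) ((T \<inter> F) - {j'} \<union> {s})))
                                 (ext_add (\<mu> (E - S) (S \<inter> F)) (\<mu> (E - T) (T \<inter> F)))"
      by blast
    then show ?thesis
    proof cases
      case a
      have e1: "E - (S - {s} \<union> {i}) = (E - S) - {i}" "(S - {s} \<union> {i}) \<inter> F = S \<inter> F - {s}"
           "E - (T - {i} \<union> {s}) = (E - T) \<union> {i}" "(T - {i} \<union> {s}) \<inter> F = T \<inter> F \<union> {s}"
        using a(1) sF s disj by auto
      show ?thesis apply (rule bexI[of _ i]) using a e1 by auto
    next
      case b
      have e1: "E - (S - {s} \<union> {j'}) = (E - S)" "(S - {s} \<union> {j'}) \<inter> F = S \<inter> F - {s} \<union> {j'}"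
           "E - (T - {j'} \<union> {s}) = (E - T)" "(T - {j'} \<union> {s}) \<inter> F = T \<inter> F - {j'} \<union> {s}"
        using b(1) sF s disj by auto
      show ?thesis apply (rule bexI[of _ j']) using b e1 by auto
    qed
  qed
qed

lemma bwd:
  assumes fin: "finite E" "finite F" and disj: "E \<inter> F = {}"
    and M: "\<forall>S T. S \<subseteq> E \<union> F \<and> card S = card E \<and> T \<subseteq> E \<union> F \<and> card T = card E \<longrightarrow>
        (\<forall>s \<in> S - T. \<exists>t \<in> T - S.
           ext_le (ext_add (\<mu> (E - (S - {s} \<union> {t})) ((S - {s} \<union> {t}) \<inter> F))
                     (\<mu> (E - (T - {t} \<union> {s})) ((T - {t} \<union> {s}) \<inter> F)))
                  (ext_add (\<mu> (E - S) (S \<inter> F)) (\<mu> (E - T) (T \<inter> F))))"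
    and d1: "bimat_dom E F I J" and d2: "bimat_dom E F I' J'"
  shows "(\<forall>i' \<in> I' - I.
           (\<exists>i \<in> I - I'. ext_le (ext_add (\<mu> (I - {i} \<union> {i'}) J) (\<mu> (I' - {i'} \<union> {i}) J'))
                                 (ext_add (\<mu> I J) (\<mu> I' J'))) \<or>
           (\<exists>j' \<in> J' - J. ext_le (ext_add (\<mu> (I \<union> {i'}) (J \<union> {j'})) (\<mu> (I' - {i'}) (J' - {j'})))
                                 (ext_add (\<mu> I J) (\<mu> I' J')))) \<and>
        (\<forall>j \<in> J - J'.
           (\<exists>i \<in> I - I'. ext_le (ext_add (\<mu> (I - {i}) (J - {j})) (\<mu> (I' \<union> {i}) (J' \<union> {j})))
                                 (ext_add (\<mu> I J) (\<mu> I' J'))) \<or>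
           (\<exists>j' \<in> J' - J. ext_le (ext_add (\<mu> I (J - {j} \<union> {j'})) (\<mu> I' (J' - {j'} \<union> {j})))
                                 (ext_add (\<mu> I J) (\<mu> I' J'))))"
proof -
  define S where "S = (E - I) \<union> J"
  define T where "T = (E - I') \<union> J'"
  have sub: "I \<subseteq> E" "J \<subseteq> F" "I' \<subseteq> E" "J' \<subseteq> F" using d1 d2 unfolding bimat_dom_def by auto
  have cS: "card S = card E" unfolding S_def using d1 card_S[OF fin disj] unfolding bimat_dom_def by auto
  have cT: "card T = card E" unfolding T_def using d2 card_S[OF fin disj] unfolding bimat_dom_def by auto
  have SS: "S \<subseteq> E \<union> F" "T \<subseteq> E \<union> F" unfolding S_def T_def using sub by auto
  have eS: "E - S = I" "S \<inter> F = J" "E - T = I'" "T \<inter> F = J'"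
    unfolding S_def T_def using sub disj by auto
  have X: "\<forall>s \<in> S - T. \<exists>t \<in> T - S.
           ext_le (ext_add (\<mu> (E - (S - {s} \<union> {t})) ((S - {s} \<union> {t}) \<inter> F))
                     (\<mu> (E - (T - {t} \<union> {s})) ((T - {t} \<union> {s}) \<inter> F)))
                  (ext_add (\<mu> I J) (\<mu> I' J'))"
    using M SS cS cT eS by metis
  show ?thesis
  proof (intro conjI ballI)
    fix s assume si: "s \<in> I' - I"
    hence "s \<in> S - T" unfolding S_def T_def using sub disj by auto
    with X obtain t where t: "t \<in> T - S" and ineq: "ext_le (ext_add (\<mu> (E - (S - {s} \<union> {t})) ((S - {s} \<union> {t}) \<inter> F))
                     (\<mu> (E - (T - {t} \<union> {s})) ((T - {t} \<union> {s}) \<inter> F)))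
                  (ext_add (\<mu> I J) (\<mu> I' J'))" by blast
    show "(\<exists>i \<in> I - I'. ext_le (ext_add (\<mu> (I - {i} \<union> {s}) J) (\<mu> (I' - {s} \<union> {i}) J'))
                                 (ext_add (\<mu> I J) (\<mu> I' J'))) \<or>
           (\<exists>j' \<in> J' - J. ext_le (ext_add (\<mu> (I \<union> {s}) (J \<union> {j'})) (\<mu> (I' - {s}) (J' - {j'})))
                                 (ext_add (\<mu> I J) (\<mu> I' J')))"
    proof (cases "t \<in> E")
      case True
      have "t \<in> I - I'" using t True sub disj unfolding S_def T_def by auto
      moreover have "E - (S - {s} \<union> {t}) = I - {t} \<union> {s}" "(S - {s} \<union> {t}) \<inter> F = J"
           "E - (T - {t} \<union> {s}) = I' - {s} \<union> {t}" "(T - {t} \<union> {s}) \<inter> F = J'"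
        using True si t sub disj unfolding S_def T_def by auto
      ultimately show ?thesis using ineq by auto
    next
      case False
      have "t \<in> J' - J" using t False sub disj SS unfolding S_def T_def by auto
      moreover have "E - (S - {s} \<union> {t}) = I \<union> {s}" "(S - {s} \<union> {t}) \<inter> F = J \<union> {t}"
           "E - (T - {t} \<union> {s}) = I' - {s}" "(T - {t} \<union> {s}) \<inter> F = J' - {t}"
        using False si t sub disj unfolding S_def T_def by auto
      ultimately show ?thesis using ineq by auto
    qed
  next
    fix s assume si: "s \<in> J - J'"
    hence "s \<in> S - T" unfolding S_def T_def using sub disj by auto
    with X obtain t where t: "t \<in> T - S" and ineq: "ext_le (ext_add (\<mu> (E - (S - {s} \<union> {t})) ((S - {s} \<union> {t}) \<inter> F))
                     (\<mu> (E - (T - {t} \<union> {s})) ((T - {t} \<union> {s}) \<inter> F)))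
                  (ext_add (\<mu> I J) (\<mu> I' J'))" by blast
    show "(\<exists>i \<in> I - I'. ext_le (ext_add (\<mu> (I - {i}) (J - {s})) (\<mu> (I' \<union> {i}) (J' \<union> {s})))
                                 (ext_add (\<mu> I J) (\<mu> I' J'))) \<or>
           (\<exists>j' \<in> J' - J. ext_le (ext_add (\<mu> I (J - {s} \<union> {j'})) (\<mu> I' (J' - {j'} \<union> {s})))
                                 (ext_add (\<mu> I J) (\<mu> I' J')))"
    proof (cases "t \<in> E")
      case True
      have "t \<in> I - I'" using t True sub disj unfolding S_def T_def by auto
      moreover have "E - (S - {s} \<union> {t}) = I - {t}" "(S - {s} \<union> {t}) \<inter> F = J - {s}"
           "E - (T - {t} \<union> {s}) = I' \<union> {t}" "(T - {t} \<union> {s}) \<inter> F = J' \<union> {s}"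
        using True si t sub disj unfolding S_def T_def by auto
      ultimately show ?thesis using ineq by auto
    next
      case False
      have "t \<in> J' - J" using t False sub disj SS unfolding S_def T_def by auto
      moreover have "E - (S - {s} \<union> {t}) = I" "(S - {s} \<union> {t}) \<inter> F = J - {s} \<union> {t}"
           "E - (T - {t} \<union> {s}) = I'" "(T - {t} \<union> {s}) \<inter> F = J' - {t} \<union> {s}"
        using False si t sub disj unfolding S_def T_def by auto
      ultimately show ?thesis using ineq by auto
    qed
  qed
qed

theorem proposition2p2:
  fixes E F :: "'e set"
    and \<mu> :: "'e set \<Rightarrow> 'e set \<Rightarrow> 'g::linordered_ab_group_add option"
  assumes "finite E" and "finite F" and "E \<inter> F = {}"
  shows "valuated_bimatroid_axioms E F \<mu> \<longleftrightarrow>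
           (valuated_matroid (E \<union> F) (card E) (\<lambda>S. \<mu> (E - S) (S \<inter> F)) \<and>
            (\<lambda>S. \<mu> (E - S) (S \<inter> F)) E = Some 0)"
proof
  have EE: "E - E = {}" "E \<inter> F = {}" using assms by auto
  {
    assume ax: "valuated_bimatroid_axioms E F \<mu>"
    have z: "\<mu> {} {} = Some 0" using ax unfolding valuated_bimatroid_axioms_def by blast
    show "valuated_matroid (E \<union> F) (card E) (\<lambda>S. \<mu> (E - S) (S \<inter> F)) \<and>
            (\<lambda>S. \<mu> (E - S) (S \<inter> F)) E = Some 0"
      unfolding valuated_matroid_def
      using assms z EE fwd[OF assms(1,2,3) ax] by auto
  }
  {
    assume h: "valuated_matroid (E \<union> F) (card E) (\<lambda>S. \<mu> (E - S) (S \<inter> F)) \<and>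
            (\<lambda>S. \<mu> (E - S) (S \<inter> F)) E = Some 0"
    have z: "\<mu> {} {} = Some 0" using h EE by simp
    have M: "\<forall>S T. S \<subseteq> E \<union> F \<and> card S = card E \<and> T \<subseteq> E \<union> F \<and> card T = card E \<longrightarrow>
        (\<forall>s \<in> S - T. \<exists>t \<in> T - S.
           ext_le (ext_add (\<mu> (E - (S - {s} \<union> {t})) ((S - {s} \<union> {t}) \<inter> F))
                     (\<mu> (E - (T - {t} \<union> {s})) ((T - {t} \<union> {s}) \<inter> F)))
                  (ext_add (\<mu> (E - S) (S \<inter> F)) (\<mu> (E - T) (T \<inter> F))))"
      using h unfolding valuated_matroid_def by simp
    show "valuated_bimatroid_axioms E F \<mu>"
      unfolding valuated_bimatroid_axioms_def
      using z bwd[OF assms(1,2,3) M] by blast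
  }
qed

end
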